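(* Consider an operational theory (describing an experiment) containing a which-way measurement $Z$ and a which-phase measurement $X$, each with outcomes in $\{+1,-1\}$, and suppose some realizable operational state $\vec{s}_1$ satisfies the $A_1^2$-orbit-realizability condition relative to $Z$ and $X$. If the path distinguishability $\mathcal{P}=|\langle Z\rangle_{\vec{s}_1}|$ and fringe visibility $\mathcal{V}=|\langle X\rangle_{\vec{s}_1}|$ of this state satisfy $\mathcal{V}+\mathcal{P}>1$, then the operational theory (experiment) admits no (generalized-)noncontextual ontological model.
   Context: An operational theory (for a single system, prepare-measure scenario) specifies a set of preparations $P$, measurements $M$, and probabilities $\mathbb{P}(y|M,P)$. Each preparation is represented by a real vector $\vec{s}_P$ (its operational state) and each effect $[y|M]$ by a real vector $\vec{e}_{y|M}$ with $\mathbb{P}(y|M,P)=\vec{s}_P\cdot\vec{e}_{y|M}$; two preparations are operationally equivalent iff they have the same vector. The set of realizable operational states is closed under convex mixtures. For a measurement $M$ with outcomes $\pm1$, $\langle M\rangle_{\vec{s}}=\mathbb{P}(+1|M,\vec{s})-\mathbb{P}(-1|M,\vec{s})$. An ontological model assigns a (finite) set $\Lambda$, to each preparation $P$ a distribution $\mu(\lambda|P)$, and to each measurement $M$ a conditional distribution $\xi(y|M,\lambda)$, with $\mathbb{P}(y|M,P)=\sum_\lambda\xi(y|M,\lambda)\mu(\lambda|P)$. It is (generalized, preparation-)noncontextual if operationally equivalent preparations receive the same distribution; in particular $\sum_i w_i\vec{s}_i=\sum_j w'_j\vec{s}'_j$ (probability weights) implies $\sum_i w_i\mu(\cdot|P_i)=\sum_j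 w'_j\mu(\cdot|P'_j)$. A state $\vec{s}_1$ satisfies the $A_1^2$-orbit-realizability condition relative to $M,M'$ if there exist realizable operational states $\vec{s}_2,\vec{s}_3,\vec{s}_4$ with $\langle M\rangle_{\vec{s}_1}=\langle M\rangle_{\vec{s}_2}=-\langle M\rangle_{\vec{s}_3}=-\langle M\rangle_{\vec{s}_4}$, $\langle M'\rangle_{\vec{s}_1}=-\langle M'\rangle_{\vec{s}_2}=-\langle M'\rangle_{\vec{s}_3}=\langle M'\rangle_{\vec{s}_4}$, and $\tfrac12\vec{s}_1+\tfrac12\vec{s}_3=\tfrac12\vec{s}_2+\tfrac12\vec{s}_4$. *)

theory Defs
  imports "HOL-Analysis.Analysis"
begin

text \<open>
Operational theory: preparations are labels of type 'p, with operational state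
st P :: 'v (a real vector); measurements are labels of type 'm, with outcome set
Out M :: int set and effect vectors E M y :: 'v, so that
P(y|M,P) = st P \<bullet> E M y.  The realizable operational states are range st.
\<close>

definition op_prob :: "'v::euclidean_space \<Rightarrow> ('m \<Rightarrow> int \<Rightarrow> 'v) \<Rightarrow> 'm \<Rightarrow> int \<Rightarrow> real" where
  "op_prob s E M y = s \<bullet> E M y"

definition expect :: "('m \<Rightarrow> int \<Rightarrow> 'v::euclidean_space) \<Rightarrow> 'm \<Rightarrow> 'v \<Rightarrow> real" where
  "expect E M s = op_prob s E M 1 - op_prob s E M (-1)"

definition A12_orbit_realizable ::
  "('p \<Rightarrow> 'v::euclidean_space) \<Rightarrow> ('m \<Rightarrow> int \<Rightarrow> 'v) \<Rightarrow> 'm \<Rightarrow> 'm \<Rightarrow> 'v \<Rightarrow> bool" where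
  "A12_orbit_realizable st E M M' s1 \<longleftrightarrow>
     (\<exists>s2 \<in> range st. \<exists>s3 \<in> range st. \<exists>s4 \<in> range st.
        expect E M s1 = expect E M s2 \<and> expect E M s2 = - expect E M s3 \<and>
        - expect E M s3 = - expect E M s4 \<and>
        expect E M' s1 = - expect E M' s2 \<and> - expect E M' s2 = - expect E M' s3 \<and>
        - expect E M' s3 = expect E M' s4 \<and>
        (1/2) *\<^sub>R s1 + (1/2) *\<^sub>R s3 = (1/2) *\<^sub>R s2 + (1/2) *\<^sub>R s4)"

definition ontological_model ::
  "('p \<Rightarrow> 'v::euclidean_space) \<Rightarrow> ('m \<Rightarrow> int \<Rightarrow> 'v) \<Rightarrow> ('m \<Rightarrow> int set)
   \<Rightarrow> 'l set \<Rightarrow> ('p \<Rightarrow> 'l \<Rightarrow> real) \<Rightarrow> ('m \<Rightarrow> int \<Rightarrow> 'l \<Rightarrow> real) \<Rightarrow> bool" where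
  "ontological_model st E Out \<Lambda> \<mu> \<xi> \<longleftrightarrow>
     finite \<Lambda> \<and>
     (\<forall>P. (\<forall>l\<in>\<Lambda>. 0 \<le> \<mu> P l) \<and> (\<Sum>l\<in>\<Lambda>. \<mu> P l) = 1) \<and>
     (\<forall>M. \<forall>l\<in>\<Lambda>. (\<forall>y\<in>Out M. 0 \<le> \<xi> M y l) \<and> (\<Sum>y\<in>Out M. \<xi> M y l) = 1) \<and>
     (\<forall>M P. \<forall>y\<in>Out M. op_prob (st P) E M y = (\<Sum>l\<in>\<Lambda>. \<xi> M y l * \<mu> P l))"

definition noncontextual ::
  "('p \<Rightarrow> 'v::euclidean_space) \<Rightarrow> 'l set \<Rightarrow> ('p \<Rightarrow> 'l \<Rightarrow> real) \<Rightarrow> bool" where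
  "noncontextual st \<Lambda> \<mu> \<longleftrightarrow>
     (\<forall>(n::nat) (m::nat) (w::nat \<Rightarrow> real) (Ps::nat \<Rightarrow> 'p) (w'::nat \<Rightarrow> real) (Ps'::nat \<Rightarrow> 'p).
        (\<forall>i<n. 0 \<le> w i) \<and> (\<Sum>i<n. w i) = 1 \<and>
        (\<forall>j<m. 0 \<le> w' j) \<and> (\<Sum>j<m. w' j) = 1 \<and>
        (\<Sum>i<n. w i *\<^sub>R st (Ps i)) = (\<Sum>j<m. w' j *\<^sub>R st (Ps' j))
        \<longrightarrow> (\<forall>l\<in>\<Lambda>. (\<Sum>i<n. w i * \<mu> (Ps i) l) = (\<Sum>j<m. w' j * \<mu> (Ps' j) l)))"

end

theory Submission
  imports Defs
begin

lemma pt_ineq: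
  fixes m1 m2 m3 m4 z x s t :: real
  assumes "m1 \<ge> 0" "m2 \<ge> 0" "m3 \<ge> 0" "m4 \<ge> 0" "m1 + m3 = m2 + m4"
    and "\<bar>z\<bar> \<le> 1" "\<bar>x\<bar> \<le> 1" "\<bar>s\<bar> = 1" "\<bar>t\<bar> = 1"
  shows "s * z * ((m1 + m2 - m3 - m4)/2) + t * x * ((m1 - m2 - m3 + m4)/2) \<le> m1 + m3"
proof -
  let ?p = "(m1 + m2 - m3 - m4)/2" and ?q = "(m1 - m2 - m3 + m4)/2"
  have h: "\<bar>?p\<bar> + \<bar>?q\<bar> \<le> m1 + m3" proof -
    have "?p + ?q \<le> m1 + m3" "?p - ?q \<le> m1 + m3" "- ?p + ?q \<le> m1 + m3" "- ?p - ?q \<le> m1 + m3"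
      using assms(1-5) by (simp_all add: field_simps)
    then show ?thesis by (cases "?p \<ge> 0"; cases "?q \<ge> 0") (simp_all only: abs_of_nonneg abs_of_neg not_le)
  qed
  have a: "s * z * ?p \<le> \<bar>?p\<bar>"
  proof -
    have "s * z * ?p \<le> \<bar>s * z * ?p\<bar>" by simp
    also have "\<dots> = \<bar>z\<bar> * \<bar>?p\<bar>" using assms(8) by (simp add: abs_mult)
    also have "\<dots> \<le> \<bar>?p\<bar>" using assms(6) by (simp add: mult_left_le_one_le)
    finally show ?thesis .
  qed
  have b: "t * x * ?q \<le> \<bar>?q\<bar>"
  proof -
    have "t * x * ?q \<le> \<bar>t * x * ?q\<bar>" by simp
    also have "\<dots> = \<bar>x\<bar> * \<bar>?q\<bar>" using assms(9) by (simp add: abs_mult)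
    also have "\<dots> \<le> \<bar>?q\<bar>" using assms(7) by (simp add: mult_left_le_one_le)
    finally show ?thesis .
  qed
  show ?thesis using a b h by linarith
qed

theorem corollary2:
  fixes st :: "'p \<Rightarrow> 'v::euclidean_space"
    and E :: "'m \<Rightarrow> int \<Rightarrow> 'v"
    and Out :: "'m \<Rightarrow> int set"
    and Z X :: 'm
    and s1 :: 'v
  assumes "convex (range st)"
    and "Out Z = {1, -1}" and "Out X = {1, -1}"
    and "s1 \<in> range st"
    and "A12_orbit_realizable st E Z X s1"
    and "\<bar>expect E X s1\<bar> + \<bar>expect E Z s1\<bar> > 1"
  shows "\<not> (\<exists>(\<Lambda>::'l set) \<mu> \<xi>. ontological_model st E Out \<Lambda> \<mu> \<xi> \<and> noncontextual st \<Lambda> \<mu>)"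
proof
  assume "\<exists>(\<Lambda>::'l set) \<mu> \<xi>. ontological_model st E Out \<Lambda> \<mu> \<xi> \<and> noncontextual st \<Lambda> \<mu>"
  then obtain \<Lambda> :: "'l set" and \<mu> \<xi> where om: "ontological_model st E Out \<Lambda> \<mu> \<xi>"
    and nc: "noncontextual st \<Lambda> \<mu>" by blast
  obtain P1 where P1: "s1 = st P1" using assms(4) by auto
  obtain P2 P3 P4 where
    e1: "expect E Z (st P1) = expect E Z (st P2)" "expect E Z (st P2) = - expect E Z (st P3)"
        "- expect E Z (st P3) = - expect E Z (st P4)"
    and e2: "expect E X (st P1) = - expect E X (st P2)" "- expect E X (st P2) = - expect E X (st P3)"
        "- expect E X (st P3) = expect E X (st P4)"
    and mix: "(1/2) *\<^sub>R st P1 + (1/2) *\<^sub>R st P3 = (1/2) *\<^sub>R st P2 + (1/2) *\<^sub>R st P4"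
    using assms(5) unfolding A12_orbit_realizable_def P1 by blast
  have fin: "finite \<Lambda>" using om unfolding ontological_model_def by blast
  have mupos: "\<And>P l. l \<in> \<Lambda> \<Longrightarrow> 0 \<le> \<mu> P l" and musum: "\<And>P. (\<Sum>l\<in>\<Lambda>. \<mu> P l) = 1"
    using om unfolding ontological_model_def by blast+
  have xi: "\<And>M l. l \<in> \<Lambda> \<Longrightarrow> (\<forall>y\<in>Out M. 0 \<le> \<xi> M y l) \<and> (\<Sum>y\<in>Out M. \<xi> M y l) = 1"
    using om unfolding ontological_model_def by blast
  have rep: "\<And>M P y. y \<in> Out M \<Longrightarrow> op_prob (st P) E M y = (\<Sum>l\<in>\<Lambda>. \<xi> M y l * \<mu> P l)"
    using om unfolding ontological_model_def by blast
  define r where "r M l = \<xi> M 1 l - \<xi> M (-1) l" for M l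
  have rb: "\<bar>r M l\<bar> \<le> 1" if "Out M = {1,-1}" "l \<in> \<Lambda>" for M l
  proof -
    have "0 \<le> \<xi> M 1 l" "0 \<le> \<xi> M (-1) l" "\<xi> M 1 l + \<xi> M (-1) l = 1"
      using xi[OF that(2), of M] that(1) by auto
    then show ?thesis unfolding r_def by linarith
  qed
  have ex: "expect E M (st P) = (\<Sum>l\<in>\<Lambda>. r M l * \<mu> P l)" if "Out M = {1,-1}" for M P
    unfolding expect_def r_def using rep[of 1 M P] rep[of "-1" M P] that
    by (simp add: sum_subtractf left_diff_distrib)
  have mixl: "\<mu> P1 l + \<mu> P3 l = \<mu> P2 l + \<mu> P4 l" if "l \<in> \<Lambda>" for l
  proof -
    have "(\<forall>i<(2::nat). 0 \<le> (\<lambda>_. 1/2::real) i) \<and> (\<Sum>i<(2::nat). (\<lambda>_. 1/2::real) i) = 1 \<and>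
        (\<forall>j<(2::nat). 0 \<le> (\<lambda>_. 1/2::real) j) \<and> (\<Sum>j<(2::nat). (\<lambda>_. 1/2::real) j) = 1 \<and>
        (\<Sum>i<(2::nat). (\<lambda>_. 1/2::real) i *\<^sub>R st ((\<lambda>i. if i = 0 then P1 else P3) i)) = (\<Sum>j<(2::nat). (\<lambda>_. 1/2::real) j *\<^sub>R st ((\<lambda>i. if i = 0 then P2 else P4) j))"
      using mix by (simp add: numeral_2_eq_2 lessThan_Suc) (metis add.commute)
    then have "\<forall>l\<in>\<Lambda>. (\<Sum>i<(2::nat). (\<lambda>_. 1/2::real) i * \<mu> ((\<lambda>i. if i = 0 then P1 else P3) i) l)
        = (\<Sum>j<(2::nat). (\<lambda>_. 1/2::real) j * \<mu> ((\<lambda>i. if i = 0 then P2 else P4) j) l)"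
      using nc[unfolded noncontextual_def, rule_format, where n=2 and m=2 and w="\<lambda>_. 1/2" and Ps="\<lambda>i. if i = 0 then P1 else P3" and w'="\<lambda>_. 1/2" and Ps'="\<lambda>i. if i = 0 then P2 else P4"]
      by blast
    then have "\<mu> P3 l / 2 + \<mu> P1 l / 2 = \<mu> P4 l / 2 + \<mu> P2 l / 2"
      using that by (simp add: numeral_2_eq_2 lessThan_Suc)
    then show ?thesis by linarith
  qed
  define z where "z = expect E Z s1"
  define x where "x = expect E X s1"
  define s where "s = (if z \<ge> 0 then 1 else -1::real)"
  define t where "t = (if x \<ge> 0 then 1 else -1::real)"
  have sz: "s * z = \<bar>z\<bar>" and tx: "t * x = \<bar>x\<bar>" unfolding s_def t_def by auto
  have "(\<Sum>l\<in>\<Lambda>. s * r Z l * ((\<mu> P1 l + \<mu> P2 l - \<mu> P3 l - \<mu> P4 l)/2)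
          + t * r X l * ((\<mu> P1 l - \<mu> P2 l - \<mu> P3 l + \<mu> P4 l)/2))
       \<le> (\<Sum>l\<in>\<Lambda>. \<mu> P1 l + \<mu> P3 l)"
    apply (rule sum_mono)
    apply (rule pt_ineq)
    using mupos mixl rb assms(2,3) unfolding s_def t_def by auto
  also have "\<dots> = 2" using musum by (simp add: sum.distrib)
  also have "(\<Sum>l\<in>\<Lambda>. s * r Z l * ((\<mu> P1 l + \<mu> P2 l - \<mu> P3 l - \<mu> P4 l)/2)
          + t * r X l * ((\<mu> P1 l - \<mu> P2 l - \<mu> P3 l + \<mu> P4 l)/2))
      = s/2 * (expect E Z (st P1) + expect E Z (st P2) - expect E Z (st P3) - expect E Z (st P4))
        + t/2 * (expect E X (st P1) - expect E X (st P2) - expect E X (st P3) + expect E X (st P4))"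
  proof -
    have pw: "\<And>l. s * r Z l * ((\<mu> P1 l + \<mu> P2 l - \<mu> P3 l - \<mu> P4 l)/2)
          + t * r X l * ((\<mu> P1 l - \<mu> P2 l - \<mu> P3 l + \<mu> P4 l)/2)
        = s/2 * (r Z l * \<mu> P1 l) + s/2 * (r Z l * \<mu> P2 l) - s/2 * (r Z l * \<mu> P3 l) - s/2 * (r Z l * \<mu> P4 l)
          + t/2 * (r X l * \<mu> P1 l) - t/2 * (r X l * \<mu> P2 l) - t/2 * (r X l * \<mu> P3 l) + t/2 * (r X l * \<mu> P4 l)"
      by (simp add: field_simps)
    show ?thesis
      unfolding ex[OF assms(2)] ex[OF assms(3)] pw
      by (simp only: sum.distrib sum_subtractf sum_distrib_left[symmetric]) (simp add: algebra_simps)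
  qed
  also have "\<dots> = 2 * (s * z) + 2 * (t * x)"
  proof -
    have v: "expect E Z (st P1) = z" "expect E Z (st P2) = z" "expect E Z (st P3) = -z" "expect E Z (st P4) = -z"
      "expect E X (st P1) = x" "expect E X (st P2) = -x" "expect E X (st P3) = -x" "expect E X (st P4) = x"
      using e1 e2 unfolding z_def x_def P1 by linarith+
    show ?thesis unfolding v by (simp add: field_simps)
  qed
  finally show False using sz tx assms(6) unfolding z_def x_def by linarith
qed

end
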